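(* Let $\xi\ge1$, $0<c_*\le c^*$, $\delta_0>0$, $\delta_1\in(0,1)$, $K=4\xi^2(c^*/c_* )(1+\delta_1)/(1-\delta_1)$, and let $k,\ell$ be positive integers with $4\ell/k\ge K$ and $\max\{k+\ell,4\ell\}\le\delta_0n/\log p$. Suppose $X$ satisfies $$\min_{|S|+m\le\delta_0n/\log p}\phi_-(m,S)\ge c_*(1-\delta_1),\qquad\max_{|S|+m\le\delta_0n/\log p}\phi_+(m,S)\le c^*(1+\delta_1),$$ (minimum/maximum over subsets $S\subseteq\{1,\dots,p\}$ and positive integers $m$). Then for every nonempty $S$ with $|S|\le k$, and $m$ the smallest integer with $m\ge K|S|$, $$\kappa(\xi,S)\ge\{c_*(1-\delta_1)\}^{1/2}/2\quad\text{and}\quad\xi^2\phi_+(m,S)/\kappa^2(\xi,S)\le K.$$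
   Context: $X=(x_1,\dots,x_p)\in\mathbb{R}^{n\times p}$ is a deterministic matrix with $\|x_j\|_2^2=n$ for all $j$. For $\xi\ge1$ and nonempty $S\subseteq\{1,\dots,p\}$, the cone $\mathcal C(\xi,S)=\{u\in\mathbb{R}^p:\|u_{S^c}\|_1\le\xi\|u_S\|_1\}$ and the compatibility factor $\kappa(\xi,S)=\inf\{\|Xu\|_2|S|^{1/2}/(n^{1/2}\|u_S\|_1):0\ne u\in\mathcal C(\xi,S)\}$. For positive integers $m$, sparse eigenvalues $\phi_-(m,S)=\min_{B\supseteq S,|B\setminus S|\le m}\phi_{\min}(X_B^TX_B/n)$ and $\phi_+(m,S)=\max_{B\cap S=\emptyset,|B|\le m}\phi_{\max}(X_B^TX_B/n)$, where $X_B$ is the submatrix of columns indexed by $B$ and $\phi_{\min},\phi_{\max}$ denote smallest and largest eigenvalues. *)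

theory Defs
  imports Complex_Main
begin

text \<open>The design matrix X (n rows, p columns) is a function X :: nat => nat => real,
  entry X r j for row r in {0..<n} and column j in {1..p}.
  Vectors u in R^p are functions nat => real vanishing outside {1..p}.\<close>

definition vec_p :: "nat \<Rightarrow> (nat \<Rightarrow> real) \<Rightarrow> bool" where
  "vec_p p u \<longleftrightarrow> (\<forall>j. j \<notin> {1..p} \<longrightarrow> u j = 0)"

definition l1_on :: "nat set \<Rightarrow> (nat \<Rightarrow> real) \<Rightarrow> real" where
  "l1_on A u = (\<Sum>j\<in>A. \<bar>u j\<bar>)"

definition Xnorm :: "(nat \<Rightarrow> nat \<Rightarrow> real) \<Rightarrow> nat \<Rightarrow> nat \<Rightarrow> (nat \<Rightarrow> real) \<Rightarrow> real" where
  "Xnorm X n p u = sqrt (\<Sum>r<n. (\<Sum>j\<in>{1..p}. X r j * u j)\<^sup>2)"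

definition cone :: "nat \<Rightarrow> real \<Rightarrow> nat set \<Rightarrow> (nat \<Rightarrow> real) set" where
  "cone p \<xi> S = {u. vec_p p u \<and> l1_on ({1..p} - S) u \<le> \<xi> * l1_on S u}"

definition compat :: "(nat \<Rightarrow> nat \<Rightarrow> real) \<Rightarrow> nat \<Rightarrow> nat \<Rightarrow> real \<Rightarrow> nat set \<Rightarrow> real" where
  "compat X n p \<xi> S = Inf {Xnorm X n p u * sqrt (real (card S)) / (sqrt (real n) * l1_on S u)
                          | u. u \<in> cone p \<xi> S \<and> u \<noteq> (\<lambda>_. 0)}"

definition gram :: "(nat \<Rightarrow> nat \<Rightarrow> real) \<Rightarrow> nat \<Rightarrow> nat \<Rightarrow> nat \<Rightarrow> real" where
  "gram X n i j = (\<Sum>r<n. X r i * X r j) / real n"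

definition eigvals :: "(nat \<Rightarrow> nat \<Rightarrow> real) \<Rightarrow> nat \<Rightarrow> nat set \<Rightarrow> real set" where
  "eigvals X n B = {mu. \<exists>v. (\<forall>j. j \<notin> B \<longrightarrow> v j = 0) \<and> (\<exists>j\<in>B. v j \<noteq> 0) \<and>
      (\<forall>i\<in>B. (\<Sum>j\<in>B. gram X n i j * v j) = mu * v i)}"

definition phi_min :: "(nat \<Rightarrow> nat \<Rightarrow> real) \<Rightarrow> nat \<Rightarrow> nat set \<Rightarrow> real" where
  "phi_min X n B = Min (eigvals X n B)"

definition phi_max :: "(nat \<Rightarrow> nat \<Rightarrow> real) \<Rightarrow> nat \<Rightarrow> nat set \<Rightarrow> real" where
  "phi_max X n B = Max (eigvals X n B)"

text \<open>Sparse eigenvalues. phi_minus ranges over B with S \<subseteq> B \<subseteq> {1..p}, |B - S| \<le> m,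
  B nonempty; phi_plus over B \<subseteq> {1..p} disjoint from S with |B| \<le> m; the empty B
  (a 0x0 matrix) is taken to have largest eigenvalue 0 (harmless, since Gram matrices are PSD).\<close>
definition phi_minus :: "(nat \<Rightarrow> nat \<Rightarrow> real) \<Rightarrow> nat \<Rightarrow> nat \<Rightarrow> nat \<Rightarrow> nat set \<Rightarrow> real" where
  "phi_minus X n p m S = Min ((\<lambda>B. phi_min X n B) `
      {B. S \<subseteq> B \<and> B \<subseteq> {1..p} \<and> card (B - S) \<le> m \<and> B \<noteq> {}})"

definition phi_plus :: "(nat \<Rightarrow> nat \<Rightarrow> real) \<Rightarrow> nat \<Rightarrow> nat \<Rightarrow> nat \<Rightarrow> nat set \<Rightarrow> real" where
  "phi_plus X n p m S = Max (insert 0 ((\<lambda>B. phi_max X n B) `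
      {B. B \<subseteq> {1..p} \<and> B \<inter> S = {} \<and> card B \<le> m \<and> B \<noteq> {}}))"

end

theory Submission
  imports Defs "HOL-Analysis.Analysis"
begin

hide_const (open) Convex.cone




definition qf :: "(nat \<Rightarrow> nat \<Rightarrow> real) \<Rightarrow> nat \<Rightarrow> nat set \<Rightarrow> (nat \<Rightarrow> real) \<Rightarrow> real" where
  "qf X n B v = (\<Sum>r<n. (\<Sum>j\<in>B. X r j * v j)\<^sup>2)"

definition nsq :: "nat set \<Rightarrow> (nat \<Rightarrow> real) \<Rightarrow> real" where
  "nsq B v = (\<Sum>j\<in>B. (v j)\<^sup>2)"

definition supp_in :: "nat set \<Rightarrow> (nat \<Rightarrow> real) \<Rightarrow> bool" where
  "supp_in B v \<longleftrightarrow> (\<forall>j. j \<notin> B \<longrightarrow> v j = 0)"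

lemma gram_identity:
  assumes "n > 0"
  shows "(\<Sum>r<n. X r i * (\<Sum>j\<in>B. X r j * v j)) = real n * (\<Sum>j\<in>B. gram X n i j * v j)"
proof -
  have "(\<Sum>r<n. X r i * (\<Sum>j\<in>B. X r j * v j)) = (\<Sum>j\<in>B. (\<Sum>r<n. X r i * X r j) * v j)"
    by (simp add: sum_distrib_left sum_distrib_right sum.swap[of _ B] mult.assoc)
  also have "\<dots> = real n * (\<Sum>j\<in>B. gram X n i j * v j)"
    using assms by (simp add: gram_def sum_distrib_left)
  finally show ?thesis .
qed

lemma gram_sym: "gram X n i j = gram X n j i"
  by (simp add: gram_def mult.commute)

lemma qf_scale: "qf X n B (\<lambda>j. c * v j) = c\<^sup>2 * qf X n B v"
proof -
  have "\<And>r. (\<Sum>j\<in>B. X r j * (c * v j)) = c * (\<Sum>j\<in>B. X r j * v j)"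
    by (simp add: sum_distrib_left algebra_simps)
  then have "qf X n B (\<lambda>j. c * v j) = (\<Sum>r<n. (c * (\<Sum>j\<in>B. X r j * v j))\<^sup>2)"
    by (simp only: qf_def)
  also have "\<dots> = (\<Sum>r<n. c\<^sup>2 * (\<Sum>j\<in>B. X r j * v j)\<^sup>2)" by (simp only: power_mult_distrib)
  also have "\<dots> = c\<^sup>2 * qf X n B v" by (simp only: qf_def sum_distrib_left)
  finally show ?thesis .
qed

lemma nsq_scale: "nsq B (\<lambda>j. c * v j) = c\<^sup>2 * nsq B v"
  by (simp add: nsq_def power_mult_distrib sum_distrib_left)

lemma nsq_nonneg: "nsq B v \<ge> 0" by (simp add: nsq_def sum_nonneg)
lemma qf_nonneg: "qf X n B v \<ge> 0" by (simp add: qf_def sum_nonneg)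

lemma nsq_zero: assumes "finite B" "nsq B v = 0" shows "qf X n B v = 0"
proof -
  have "\<forall>j\<in>B. (v j)\<^sup>2 = 0" using assms sum_nonneg_eq_0_iff[of B "\<lambda>j. (v j)\<^sup>2"] by (simp add: nsq_def)
  then show ?thesis by (simp add: qf_def)
qed

lemma sphere_compact:
  assumes "finite B"
  shows "compact {v::nat\<Rightarrow>real. supp_in B v \<and> nsq B v = 1}"
proof -
  define P where "P = (Pi\<^sub>E UNIV (\<lambda>j. if j \<in> B then {-1..1::real} else {0}))"
  have "compactin (product_topology (\<lambda>_. euclidean) UNIV) P"
    unfolding P_def by (subst compactin_PiE) auto
  then have cP: "compact P" by (simp add: euclidean_product_topology)
  have cl: "closed {v::nat\<Rightarrow>real. nsq B v = 1}"
    unfolding nsq_def by (intro closed_Collect_eq continuous_intros continuous_on_product_coordinates)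
  have "{v. supp_in B v \<and> nsq B v = 1} = P \<inter> {v. nsq B v = 1}"
  proof (intro set_eqI iffI)
    fix v assume v: "v \<in> {v. supp_in B v \<and> nsq B v = 1}"
    have "\<bar>v j\<bar> \<le> 1" if "j \<in> B" for j
    proof -
      have "(v j)\<^sup>2 \<le> nsq B v" unfolding nsq_def
        using assms that by (intro member_le_sum) auto
      then have "(v j)\<^sup>2 \<le> 1\<^sup>2" using v by simp
      then show ?thesis using abs_le_square_iff by (metis abs_one)
    qed
    then show "v \<in> P \<inter> {v. nsq B v = 1}" using v by (auto simp: P_def supp_in_def abs_le_iff)
  next
    fix v assume "v \<in> P \<inter> {v. nsq B v = 1}"
    then show "v \<in> {v. supp_in B v \<and> nsq B v = 1}"
      by (auto simp: P_def supp_in_def PiE_def split: if_splits)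
  qed
  then show ?thesis using compact_Int_closed[OF cP cl] by simp
qed

lemma sphere_nonempty:
  assumes "b \<in> B" "finite B"
  shows "(\<lambda>j. if j = b then 1 else 0) \<in> {v::nat\<Rightarrow>real. supp_in B v \<and> nsq B v = 1}"
proof -
  have "(\<Sum>j\<in>B. ((if j = b then 1 else 0)::real)\<^sup>2) = (\<Sum>j\<in>B. if j = b then 1 else 0)"
    by (rule sum.cong) auto
  then show ?thesis using assms by (auto simp: supp_in_def nsq_def)
qed

lemma qf_cont: "continuous_on UNIV (qf X n B)"
  unfolding qf_def by (intro continuous_intros continuous_on_product_coordinates)

lemma extremize:
  assumes fin: "finite B" and ne: "B \<noteq> {}"
  shows "\<exists>v0. supp_in B v0 \<and> nsq B v0 = 1 \<and>
           (\<forall>v. supp_in B v \<longrightarrow> \<sigma> * qf X n B v \<ge> \<sigma> * qf X n B v0 * nsq B v)"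
proof -
  define K where "K = {v::nat\<Rightarrow>real. supp_in B v \<and> nsq B v = 1}"
  have cK: "compact K" using sphere_compact[OF fin] by (simp add: K_def)
  from ne obtain b where "b \<in> B" by auto
  then have neK: "K \<noteq> {}" using sphere_nonempty[OF _ fin] unfolding K_def by blast
  have ct: "continuous_on K (\<lambda>v. \<sigma> * qf X n B v)"
    by (intro continuous_intros continuous_on_subset[OF qf_cont]) auto
  obtain v0 where v0: "v0 \<in> K" and mn: "\<And>w. w \<in> K \<Longrightarrow> \<sigma> * qf X n B v0 \<le> \<sigma> * qf X n B w"
    using continuous_attains_inf[OF cK neK ct] by blast
  have "\<sigma> * qf X n B v \<ge> \<sigma> * qf X n B v0 * nsq B v" if sv: "supp_in B v" for v
  proof (cases "nsq B v = 0")
    case True then show ?thesis using nsq_zero[OF fin True] by simp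
  next
    case False
    then have pos: "nsq B v > 0" using nsq_nonneg[of B v] by linarith
    define c where "c = 1 / sqrt (nsq B v)"
    have c2: "c\<^sup>2 * nsq B v = 1" using pos by (simp add: c_def power_divide)
    have "(\<lambda>j. c * v j) \<in> K" using sv c2 by (auto simp: K_def supp_in_def nsq_scale)
    from mn[OF this] have "\<sigma> * qf X n B v0 \<le> c\<^sup>2 * (\<sigma> * qf X n B v)" by (simp add: qf_scale mult.left_commute)
    then have "\<sigma> * qf X n B v0 * nsq B v \<le> c\<^sup>2 * nsq B v * (\<sigma> * qf X n B v)"
      using pos by (metis mult.commute mult.left_commute mult_right_mono less_eq_real_def)
    then show ?thesis using c2 by simp
  qed
  then show ?thesis using v0 unfolding K_def by blast
qed

lemma quad_nonneg_lin_zero: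
  fixes d e :: real
  assumes "\<And>t. 2 * t * d + t\<^sup>2 * e \<ge> 0"
  shows "d = 0"
proof -
  define E where "E = \<bar>e\<bar> + 1"
  have E: "E > 0" "e \<le> E" "e - 2 * E < 0" by (auto simp: E_def)
  have "2 * (- d / E) * d + (- d / E)\<^sup>2 * e \<ge> 0" by (rule assms)
  then have "E\<^sup>2 * (2 * (- d / E) * d + (- d / E)\<^sup>2 * e) \<ge> 0" by simp
  also have "E\<^sup>2 * (2 * (- d / E) * d + (- d / E)\<^sup>2 * e) = d\<^sup>2 * (e - 2 * E)"
    using E by (simp add: field_simps power2_eq_square)
  finally have "d\<^sup>2 * (e - 2 * E) \<ge> 0" .
  moreover have "d\<^sup>2 * (e - 2 * E) \<le> 0" using E(3) by (simp add: mult_nonneg_nonpos)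
  ultimately have "d\<^sup>2 * (e - 2 * E) = 0" by linarith
  then show ?thesis using E(3) by simp
qed

lemma stationary:
  assumes fin: "finite B" and i: "i \<in> B" and s1: "\<sigma>\<^sup>2 = 1"
    and v0: "supp_in B v0" "nsq B v0 = 1"
    and ext: "\<forall>v. supp_in B v \<longrightarrow> \<sigma> * qf X n B v \<ge> \<sigma> * qf X n B v0 * nsq B v"
  shows "(\<Sum>r<n. X r i * (\<Sum>j\<in>B. X r j * v0 j)) = qf X n B v0 * v0 i"
proof -
  define a where "a r = (\<Sum>j\<in>B. X r j * v0 j)" for r
  define A where "A = (\<Sum>r<n. X r i * a r)"
  define C where "C = (\<Sum>r<n. (X r i)\<^sup>2)"
  define \<mu> where "\<mu> = qf X n B v0"
  have key: "2 * t * (\<sigma> * (A - \<mu> * v0 i)) + t\<^sup>2 * (\<sigma> * (C - \<mu>)) \<ge> 0" for t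
  proof -
    define w where "w j = v0 j + t * (if j = i then 1 else 0)" for j
    have sw: "supp_in B w" using v0 i by (auto simp: supp_in_def w_def)
    have lin: "(\<Sum>j\<in>B. X r j * w j) = a r + t * X r i" for r
    proof -
      have "(\<Sum>j\<in>B. X r j * w j) = (\<Sum>j\<in>B. X r j * v0 j + (if j = i then t * X r j else 0))"
        by (rule sum.cong) (auto simp: w_def algebra_simps)
      also have "\<dots> = (\<Sum>j\<in>B. X r j * v0 j) + (\<Sum>j\<in>B. if j = i then t * X r j else 0)"
        by (rule sum.distrib)
      also have "\<dots> = a r + t * X r i" using fin i by (simp add: a_def)
      finally show ?thesis .
    qed
    have q: "qf X n B w = \<mu> + 2 * t * A + t\<^sup>2 * C"
    proof -
      have "qf X n B w = (\<Sum>r<n. (a r)\<^sup>2 + 2 * t * (X r i * a r) + t\<^sup>2 * (X r i)\<^sup>2)"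
        unfolding qf_def lin by (rule sum.cong) (auto simp: power2_eq_square algebra_simps)
      also have "\<dots> = \<mu> + 2 * t * A + t\<^sup>2 * C"
        by (simp add: sum.distrib sum_distrib_left \<mu>_def qf_def a_def A_def C_def)
      finally show ?thesis .
    qed
    have ns: "nsq B w = 1 + 2 * t * v0 i + t\<^sup>2"
    proof -
      have "nsq B w = (\<Sum>j\<in>B. (v0 j)\<^sup>2 + (if j = i then 2 * t * v0 j + t\<^sup>2 else 0))"
        unfolding nsq_def w_def by (rule sum.cong) (auto simp: power2_eq_square algebra_simps)
      also have "\<dots> = 1 + 2 * t * v0 i + t\<^sup>2"
        using fin i v0(2) by (simp add: sum.distrib nsq_def)
      finally show ?thesis .
    qed
    have "\<sigma> * qf X n B w \<ge> \<sigma> * qf X n B v0 * nsq B w" using ext sw by blast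
    then have "\<sigma> * (\<mu> + 2 * t * A + t\<^sup>2 * C) \<ge> \<sigma> * \<mu> * (1 + 2 * t * v0 i + t\<^sup>2)"
      by (simp add: q ns \<mu>_def)
    then show ?thesis by (simp add: algebra_simps)
  qed
  have "\<sigma> * (A - \<mu> * v0 i) = 0" by (rule quad_nonneg_lin_zero[OF key])
  then have "A = \<mu> * v0 i" using s1 by (auto simp: power2_eq_square)
  then show ?thesis by (simp add: A_def a_def \<mu>_def)
qed

lemma nsq_pos_ex: assumes "finite B" "nsq B v = 1" shows "\<exists>j\<in>B. v j \<noteq> 0"
proof (rule ccontr)
  assume "\<not> ?thesis"
  then have "nsq B v = 0" by (simp add: nsq_def)
  with assms show False by simp
qed

lemma eig_of_stationary:
  assumes n: "n > 0" and fin: "finite B" and v0: "supp_in B v0" "nsq B v0 = 1"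
    and st: "\<And>i. i \<in> B \<Longrightarrow> (\<Sum>r<n. X r i * (\<Sum>j\<in>B. X r j * v0 j)) = qf X n B v0 * v0 i"
  shows "qf X n B v0 / real n \<in> eigvals X n B"
proof -
  have "\<forall>i\<in>B. (\<Sum>j\<in>B. gram X n i j * v0 j) = qf X n B v0 / real n * v0 i"
  proof
    fix i assume "i \<in> B"
    from st[OF this] gram_identity[OF n, where X=X and i=i and B=B and v=v0]
    have "real n * (\<Sum>j\<in>B. gram X n i j * v0 j) = qf X n B v0 * v0 i" by simp
    then show "(\<Sum>j\<in>B. gram X n i j * v0 j) = qf X n B v0 / real n * v0 i"
      using n by (simp add: field_simps)
  qed
  then show ?thesis using v0 nsq_pos_ex[OF fin v0(2)] unfolding eigvals_def supp_in_def by blast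
qed

lemma eig_vec:
  assumes "\<mu> \<in> eigvals X n B" "finite B"
  shows "\<exists>v. supp_in B v \<and> nsq B v = 1 \<and> (\<forall>i\<in>B. (\<Sum>j\<in>B. gram X n i j * v j) = \<mu> * v i)"
proof -
  obtain v where v: "\<forall>j. j \<notin> B \<longrightarrow> v j = 0" "\<exists>j\<in>B. v j \<noteq> 0"
      "\<forall>i\<in>B. (\<Sum>j\<in>B. gram X n i j * v j) = \<mu> * v i"
    using assms(1) unfolding eigvals_def by blast
  then obtain j0 where j0: "j0 \<in> B" "v j0 \<noteq> 0" by blast
  have "nsq B v \<ge> (v j0)\<^sup>2" unfolding nsq_def using assms(2) j0 by (intro member_le_sum) auto
  then have pos: "nsq B v > 0" using j0 by (smt (verit) zero_less_power2)
  define c where "c = 1 / sqrt (nsq B v)"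
  have c2: "c\<^sup>2 * nsq B v = 1" using pos by (simp add: c_def power_divide)
  have "\<forall>i\<in>B. (\<Sum>j\<in>B. gram X n i j * (c * v j)) = \<mu> * (c * v i)"
  proof
    fix i assume "i \<in> B"
    have "(\<Sum>j\<in>B. gram X n i j * (c * v j)) = c * (\<Sum>j\<in>B. gram X n i j * v j)"
      by (simp add: sum_distrib_left algebra_simps)
    then show "(\<Sum>j\<in>B. gram X n i j * (c * v j)) = \<mu> * (c * v i)" using v(3) \<open>i \<in> B\<close> by simp
  qed
  moreover have "supp_in B (\<lambda>j. c * v j)" using v(1) by (simp add: supp_in_def)
  moreover have "nsq B (\<lambda>j. c * v j) = 1" using c2 by (simp add: nsq_scale)
  ultimately show ?thesis by blast
qed

lemma eig_rayleigh:
  assumes n: "n > 0" and fin: "finite B"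
    and ev: "\<forall>i\<in>B. (\<Sum>j\<in>B. gram X n i j * v j) = \<mu> * v i"
  shows "qf X n B v = real n * \<mu> * nsq B v"
proof -
  define a where "a r = (\<Sum>j\<in>B. X r j * v j)" for r
  have "qf X n B v = (\<Sum>r<n. (\<Sum>i\<in>B. X r i * v i) * a r)"
    by (simp add: qf_def a_def power2_eq_square)
  also have "\<dots> = (\<Sum>i\<in>B. v i * (\<Sum>r<n. X r i * a r))"
    by (simp add: sum_distrib_left sum_distrib_right sum.swap[of _ B] algebra_simps)
  also have "\<dots> = (\<Sum>i\<in>B. v i * (real n * (\<mu> * v i)))"
    by (rule sum.cong) (use ev gram_identity[OF n] in \<open>auto simp: a_def\<close>)
  also have "\<dots> = real n * \<mu> * nsq B v"
    by (simp add: nsq_def sum_distrib_left power2_eq_square algebra_simps)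
  finally show ?thesis .
qed

lemma eig_orth:
  assumes ev1: "\<forall>i\<in>B. (\<Sum>j\<in>B. gram X n i j * v j) = \<mu> * v i"
    and ev2: "\<forall>i\<in>B. (\<Sum>j\<in>B. gram X n i j * w j) = \<mu>' * w i"
    and ne: "\<mu> \<noteq> \<mu>'"
  shows "(\<Sum>i\<in>B. v i * w i) = 0"
proof -
  have "(\<Sum>i\<in>B. w i * (\<Sum>j\<in>B. gram X n i j * v j)) = (\<Sum>j\<in>B. v j * (\<Sum>i\<in>B. gram X n j i * w i))"
  proof -
    have "(\<Sum>i\<in>B. w i * (\<Sum>j\<in>B. gram X n i j * v j)) = (\<Sum>i\<in>B. \<Sum>j\<in>B. w i * gram X n i j * v j)"
      by (simp add: sum_distrib_left mult.assoc)
    also have "\<dots> = (\<Sum>j\<in>B. \<Sum>i\<in>B. w i * gram X n i j * v j)" by (rule sum.swap)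
    also have "\<dots> = (\<Sum>j\<in>B. v j * (\<Sum>i\<in>B. gram X n j i * w i))"
      unfolding sum_distrib_left by (intro sum.cong refl) (metis gram_sym mult.commute mult.left_commute)
    finally show ?thesis .
  qed
  then have "(\<Sum>i\<in>B. w i * (\<mu> * v i)) = (\<Sum>j\<in>B. v j * (\<mu>' * w j))"
    using ev1 ev2 by simp
  then have "\<mu> * (\<Sum>i\<in>B. v i * w i) = \<mu>' * (\<Sum>i\<in>B. v i * w i)"
    by (simp add: sum_distrib_left algebra_simps)
  then show ?thesis using ne by simp
qed

lemma bessel_one:
  assumes finB: "finite B" and finF: "finite F" and j: "j \<in> B"
    and nrm: "\<forall>v\<in>F. nsq B v = 1"
    and orth: "\<forall>v\<in>F. \<forall>w\<in>F. v \<noteq> w \<longrightarrow> (\<Sum>i\<in>B. v i * w i) = 0"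
  shows "(\<Sum>v\<in>F. (v j)\<^sup>2) \<le> 1"
proof -
  define e where "e i = (if i = j then 1 else (0::real))" for i
  define P where "P i = (\<Sum>v\<in>F. v j * v i)" for i
  define Q where "Q = (\<Sum>v\<in>F. (v j)\<^sup>2)"
  have e1: "(\<Sum>i\<in>B. (e i)\<^sup>2) = 1"
  proof -
    have "(\<Sum>i\<in>B. (e i)\<^sup>2) = (\<Sum>i\<in>B. if i = j then 1 else 0)" by (rule sum.cong) (auto simp: e_def)
    then show ?thesis using finB j by simp
  qed
  have e2: "(\<Sum>i\<in>B. e i * P i) = Q"
  proof -
    have "(\<Sum>i\<in>B. e i * P i) = (\<Sum>i\<in>B. if i = j then P j else 0)" by (rule sum.cong) (auto simp: e_def)
    then show ?thesis using finB j by (simp add: P_def Q_def power2_eq_square)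
  qed
  have e3: "(\<Sum>i\<in>B. (P i)\<^sup>2) = Q"
  proof -
    have "(\<Sum>i\<in>B. (P i)\<^sup>2) = (\<Sum>i\<in>B. \<Sum>v\<in>F. \<Sum>w\<in>F. (v j * w j) * (v i * w i))"
      unfolding P_def power2_eq_square sum_product by (intro sum.cong refl) (simp add: algebra_simps)
    also have "\<dots> = (\<Sum>v\<in>F. \<Sum>w\<in>F. \<Sum>i\<in>B. (v j * w j) * (v i * w i))"
      by (subst sum.swap) (intro sum.cong refl sum.swap)
    also have "\<dots> = (\<Sum>v\<in>F. \<Sum>w\<in>F. (v j * w j) * (\<Sum>i\<in>B. v i * w i))"
      by (simp add: sum_distrib_left)
    also have "\<dots> = (\<Sum>v\<in>F. \<Sum>w\<in>F. if w = v then (v j)\<^sup>2 else 0)"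
    proof (intro sum.cong refl)
      fix v w assume "v \<in> F" "w \<in> F"
      show "(v j * w j) * (\<Sum>i\<in>B. v i * w i) = (if w = v then (v j)\<^sup>2 else 0)"
      proof (cases "w = v")
        case True
        then have "(\<Sum>i\<in>B. v i * w i) = 1" using nrm \<open>v \<in> F\<close> by (simp add: nsq_def power2_eq_square)
        then show ?thesis using True by (simp add: power2_eq_square)
      next
        case False then show ?thesis using orth \<open>v \<in> F\<close> \<open>w \<in> F\<close> by auto
      qed
    qed
    also have "\<dots> = Q" using finF by (simp add: Q_def)
    finally show ?thesis .
  qed
  have "0 \<le> (\<Sum>i\<in>B. (e i - P i)\<^sup>2)" by (simp add: sum_nonneg)
  also have "\<dots> = (\<Sum>i\<in>B. (e i)\<^sup>2) - 2 * (\<Sum>i\<in>B. e i * P i) + (\<Sum>i\<in>B. (P i)\<^sup>2)"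
    by (simp add: power2_diff sum.distrib sum_subtractf sum_distrib_left mult.assoc)
  finally have "0 \<le> 1 - 2 * Q + Q" using e1 e2 e3 by simp
  then show ?thesis by (simp add: Q_def)
qed

lemma bessel_card:
  assumes finB: "finite B" and finF: "finite F"
    and nrm: "\<forall>v\<in>F. nsq B v = 1"
    and orth: "\<forall>v\<in>F. \<forall>w\<in>F. v \<noteq> w \<longrightarrow> (\<Sum>i\<in>B. v i * w i) = 0"
  shows "card F \<le> card B"
proof -
  have "real (card F) = (\<Sum>v\<in>F. nsq B v)" using nrm by simp
  also have "\<dots> = (\<Sum>j\<in>B. \<Sum>v\<in>F. (v j)\<^sup>2)" unfolding nsq_def by (rule sum.swap)
  also have "\<dots> \<le> (\<Sum>j\<in>B. 1)" by (rule sum_mono) (rule bessel_one[OF finB finF _ nrm orth])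
  also have "\<dots> = real (card B)" by simp
  finally show ?thesis by simp
qed

lemma eig_finite:
  assumes finB: "finite B"
  shows "finite (eigvals X n B)"
proof (rule ccontr)
  define E where "E = eigvals X n B"
  assume "infinite (eigvals X n B)"
  then have inf: "infinite E" by (simp add: E_def)
  define vf where "vf \<mu> = (SOME v. supp_in B v \<and> nsq B v = 1 \<and> (\<forall>i\<in>B. (\<Sum>j\<in>B. gram X n i j * v j) = \<mu> * v i))" for \<mu>
  have vf: "nsq B (vf \<mu>) = 1 \<and> (\<forall>i\<in>B. (\<Sum>j\<in>B. gram X n i j * vf \<mu> j) = \<mu> * vf \<mu> i)" if "\<mu> \<in> E" for \<mu>
    using someI_ex[OF eig_vec[OF that[unfolded E_def] finB]] unfolding vf_def by blast
  have orth: "(\<Sum>i\<in>B. vf \<mu> i * vf \<mu>' i) = 0" if "\<mu> \<in> E" "\<mu>' \<in> E" "\<mu> \<noteq> \<mu>'" for \<mu> \<mu>'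
    using eig_orth[of B X n "vf \<mu>" \<mu> "vf \<mu>'" \<mu>'] vf[OF that(1)] vf[OF that(2)] that(3) by blast
  obtain F where F: "finite F" "card F = card B + 1" "F \<subseteq> E" using infinite_arbitrarily_large[OF inf] by blast
  have inj: "inj_on vf F"
  proof (rule inj_onI, rule ccontr)
    fix \<mu> \<mu>' assume a: "\<mu> \<in> F" "\<mu>' \<in> F" "vf \<mu> = vf \<mu>'" "\<mu> \<noteq> \<mu>'"
    then have "(\<Sum>i\<in>B. vf \<mu> i * vf \<mu> i) = 0" using orth[of \<mu> \<mu>'] F(3) by auto
    moreover have "nsq B (vf \<mu>) = 1" using vf a F(3) by auto
    ultimately show False by (simp add: nsq_def power2_eq_square)
  qed
  have "card (vf ` F) \<le> card B"
  proof (rule bessel_card[OF finB])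
    show "finite (vf ` F)" using F by simp
    show "\<forall>v\<in>vf ` F. nsq B v = 1" using vf F(3) by auto
    show "\<forall>v\<in>vf ` F. \<forall>w\<in>vf ` F. v \<noteq> w \<longrightarrow> (\<Sum>i\<in>B. v i * w i) = 0"
      using orth F(3) by auto
  qed
  then show False using card_image[OF inj] F(2) by simp
qed

lemma spectral_bounds:
  assumes n: "n > 0" and finB: "finite B" and ne: "B \<noteq> {}" and sv: "supp_in B v"
  shows "real n * phi_min X n B * nsq B v \<le> qf X n B v \<and> qf X n B v \<le> real n * phi_max X n B * nsq B v"
proof -
  have finE: "finite (eigvals X n B)" by (rule eig_finite[OF finB])
  have eb: "real n * \<mu> = qf X n B w" if "\<mu> \<in> eigvals X n B" "supp_in B w" "nsq B w = 1"
    "\<forall>i\<in>B. (\<Sum>j\<in>B. gram X n i j * w j) = \<mu> * w i" for \<mu> w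
    using eig_rayleigh[OF n finB that(4)] that(3) by simp
  obtain v0 where v0: "supp_in B v0" "nsq B v0 = 1"
    and m0: "\<forall>v. supp_in B v \<longrightarrow> 1 * qf X n B v \<ge> 1 * qf X n B v0 * nsq B v"
    using extremize[OF finB ne, of 1 X n] by blast
  obtain v1 where v1: "supp_in B v1" "nsq B v1 = 1"
    and m1: "\<forall>v. supp_in B v \<longrightarrow> (-1) * qf X n B v \<ge> (-1) * qf X n B v1 * nsq B v"
    using extremize[OF finB ne, of "-1" X n] by blast
  have e0: "qf X n B v0 / real n \<in> eigvals X n B"
    by (rule eig_of_stationary[OF n finB v0]) (rule stationary[OF finB _ _ v0 m0], auto)
  have e1: "qf X n B v1 / real n \<in> eigvals X n B"
    by (rule eig_of_stationary[OF n finB v1]) (rule stationary[OF finB _ _ v1 m1], auto)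
  have "\<mu> \<ge> qf X n B v0 / real n \<and> \<mu> \<le> qf X n B v1 / real n" if mu: "\<mu> \<in> eigvals X n B" for \<mu>
  proof -
    obtain w where w: "supp_in B w" "nsq B w = 1" "\<forall>i\<in>B. (\<Sum>j\<in>B. gram X n i j * w j) = \<mu> * w i"
      using eig_vec[OF mu finB] by blast
    have "real n * \<mu> = qf X n B w" by (rule eb[OF mu w])
    moreover have "qf X n B w \<ge> qf X n B v0" using m0 w by force
    moreover have "qf X n B w \<le> qf X n B v1" using m1 w by force
    ultimately show ?thesis using n by (simp add: field_simps)
  qed
  then have "phi_min X n B = qf X n B v0 / real n" "phi_max X n B = qf X n B v1 / real n"
    unfolding phi_min_def phi_max_def using e0 e1 finE
    by (auto intro!: Min_eqI Max_eqI)
  then show ?thesis using m0 m1 sv n by auto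
qed



lemma shift_poly:
  fixes l h g M :: real
  assumes "l > 0" "g \<le> h" "0 \<le> g"
  shows "4 * l * ((h + g) * M - 3 * l * h * g + l * g\<^sup>2) \<le> (l * h + M)\<^sup>2"
proof -
  have "(l * h + M)\<^sup>2 - 4 * l * ((h + g) * M - 3 * l * h * g + l * g\<^sup>2)
        = (M - l * h - 2 * l * g)\<^sup>2 + 8 * l\<^sup>2 * (g * (h - g))"
    by (simp add: power2_eq_square algebra_simps)
  moreover have "8 * l\<^sup>2 * (g * (h - g)) \<ge> 0" using assms by simp
  ultimately show ?thesis by (smt (verit) zero_le_power2)
qed

lemma shift_block:
  fixes y :: "nat \<Rightarrow> real"
  assumes l: "l > 0" and mono: "\<And>i j. i \<le> j \<Longrightarrow> y j \<le> y i" and nn: "\<And>i. y i \<ge> 0"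
  shows "sqrt (\<Sum>i\<in>{m+l..<m+5*l}. (y i)\<^sup>2) \<le> (\<Sum>i\<in>{m..<m+4*l}. y i) / (2 * sqrt (real l))"
proof -
  define h where "h = y (m + l)"
  define g where "g = y (m + 4*l - 1)"
  define A where "A = (\<Sum>i\<in>{m..<m+l}. y i)"
  define M where "M = (\<Sum>i\<in>{m+l..<m+4*l}. y i)"
  have gh: "g \<le> h" "0 \<le> g" using mono nn l by (auto simp: g_def h_def)
  have A: "A \<ge> real l * h"
  proof -
    have "(\<Sum>i\<in>{m..<m+l}. h) \<le> A" unfolding A_def h_def by (rule sum_mono) (auto intro: mono)
    then show ?thesis by simp
  qed
  have mid: "(\<Sum>i\<in>{m+l..<m+4*l}. (y i)\<^sup>2) \<le> (h + g) * M - 3 * real l * h * g"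
  proof -
    have "(\<Sum>i\<in>{m+l..<m+4*l}. (y i)\<^sup>2) \<le> (\<Sum>i\<in>{m+l..<m+4*l}. (h + g) * y i - h * g)"
    proof (rule sum_mono)
      fix i assume i: "i \<in> {m+l..<m+4*l}"
      have "y i \<le> h" unfolding h_def using i by (auto intro: mono)
      moreover have "g \<le> y i" unfolding g_def using i by (auto intro: mono)
      ultimately have "(y i - h) * (y i - g) \<le> 0" by (simp add: mult_nonpos_nonneg)
      then show "(y i)\<^sup>2 \<le> (h + g) * y i - h * g" by (simp add: power2_eq_square algebra_simps)
    qed
    also have "\<dots> = (h + g) * M - 3 * real l * h * g"
      by (simp add: sum_subtractf sum_distrib_left M_def)
    finally show ?thesis .
  qed
  have last: "(\<Sum>i\<in>{m+4*l..<m+5*l}. (y i)\<^sup>2) \<le> real l * g\<^sup>2"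
  proof -
    have "(\<Sum>i\<in>{m+4*l..<m+5*l}. (y i)\<^sup>2) \<le> (\<Sum>i\<in>{m+4*l..<m+5*l}. g\<^sup>2)"
    proof (rule sum_mono)
      fix i assume i: "i \<in> {m+4*l..<m+5*l}"
      have "y i \<le> g" unfolding g_def using i by (auto intro: mono)
      then show "(y i)\<^sup>2 \<le> g\<^sup>2" using nn[of i] by (simp add: power_mono)
    qed
    then show ?thesis by simp
  qed
  have split1: "(\<Sum>i\<in>{m+l..<m+5*l}. (y i)\<^sup>2) = (\<Sum>i\<in>{m+l..<m+4*l}. (y i)\<^sup>2) + (\<Sum>i\<in>{m+4*l..<m+5*l}. (y i)\<^sup>2)"
    by (rule sum.atLeastLessThan_concat[symmetric]) auto
  have split2: "(\<Sum>i\<in>{m..<m+4*l}. y i) = A + M"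
    unfolding A_def M_def by (rule sum.atLeastLessThan_concat[symmetric]) auto
  have Mnn: "M \<ge> 0" unfolding M_def by (simp add: sum_nonneg nn)
  have lpos: "real l > 0" using l by simp
  have "(\<Sum>i\<in>{m+l..<m+5*l}. (y i)\<^sup>2) \<le> (h + g) * M - 3 * real l * h * g + real l * g\<^sup>2"
    using split1 mid last by linarith
  also have "\<dots> \<le> (real l * h + M)\<^sup>2 / (4 * real l)"
    using shift_poly[OF lpos gh, of M] lpos by (simp add: field_simps)
  also have "\<dots> \<le> (A + M)\<^sup>2 / (4 * real l)"
    using A Mnn gh lpos by (intro divide_right_mono power_mono) auto
  finally have "sqrt (\<Sum>i\<in>{m+l..<m+5*l}. (y i)\<^sup>2) \<le> sqrt ((A + M)\<^sup>2 / (4 * real l))"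
    by (rule real_sqrt_le_mono)
  moreover have AM: "A + M \<ge> 0"
  proof -
    have "real l * h \<ge> 0" using gh lpos by simp
    then show ?thesis using A Mnn by linarith
  qed
  ultimately have "sqrt (\<Sum>i\<in>{m+l..<m+5*l}. (y i)\<^sup>2) \<le> sqrt ((A + M)\<^sup>2 / (4 * real l))" by simp
  also have "\<dots> = (A + M) / (2 * sqrt (real l))"
    using AM lpos by (simp add: real_sqrt_divide real_sqrt_mult)
  finally show ?thesis using split2 by simp
qed

lemma shift_total:
  fixes y :: "nat \<Rightarrow> real"
  assumes l: "l > 0" and mono: "\<And>i j. i \<le> j \<Longrightarrow> y j \<le> y i" and nn: "\<And>i. y i \<ge> 0"
  shows "(\<Sum>t<N. sqrt (\<Sum>i\<in>{l + t*(4*l)..<l + t*(4*l) + 4*l}. (y i)\<^sup>2))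
         \<le> (\<Sum>i<N*(4*l). y i) / (2 * sqrt (real l))"
proof -
  have "(\<Sum>t<N. sqrt (\<Sum>i\<in>{l + t*(4*l)..<l + t*(4*l) + 4*l}. (y i)\<^sup>2))
        \<le> (\<Sum>t<N. (\<Sum>i\<in>{t*(4*l)..<t*(4*l)+4*l}. y i) / (2 * sqrt (real l)))"
  proof (rule sum_mono)
    fix t
    have e: "{l + t*(4*l)..<l + t*(4*l) + 4*l} = {t*(4*l)+l..<t*(4*l)+5*l}" by auto
    show "sqrt (\<Sum>i\<in>{l + t*(4*l)..<l + t*(4*l) + 4*l}. (y i)\<^sup>2) \<le> (\<Sum>i\<in>{t*(4*l)..<t*(4*l)+4*l}. y i) / (2 * sqrt (real l))"
      unfolding e by (rule shift_block[OF l mono nn])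
  qed
  also have "\<dots> = (\<Sum>i<N*(4*l). y i) / (2 * sqrt (real l))"
    by (simp add: sum_divide_distrib[symmetric] sum.nat_group)
  finally show ?thesis .
qed

lemma L2_sum_le:
  assumes "finite T"
  shows "L2_set (\<lambda>r. \<Sum>t\<in>T. P t r) A \<le> (\<Sum>t\<in>T. L2_set (P t) A)"
  using assms
proof (induction T rule: finite_induct)
  case empty then show ?case by (simp add: L2_set_def)
next
  case (insert x F)
  have "L2_set (\<lambda>r. \<Sum>t\<in>insert x F. P t r) A = L2_set (\<lambda>r. P x r + (\<Sum>t\<in>F. P t r)) A"
    using insert by simp
  also have "\<dots> \<le> L2_set (P x) A + L2_set (\<lambda>r. \<Sum>t\<in>F. P t r) A" by (rule L2_set_triangle_ineq)
  also have "\<dots> \<le> L2_set (P x) A + (\<Sum>t\<in>F. L2_set (P t) A)" using insert by simp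
  finally show ?case using insert by simp
qed

lemma L2_reverse:
  "L2_set f A \<le> L2_set (\<lambda>r. f r + g r) A + L2_set g A"
proof -
  have "L2_set f A = L2_set (\<lambda>r. (f r + g r) + (- g r)) A" by simp
  also have "\<dots> \<le> L2_set (\<lambda>r. f r + g r) A + L2_set (\<lambda>r. - g r) A" by (rule L2_set_triangle_ineq)
  also have "L2_set (\<lambda>r. - g r) A = L2_set g A" by (simp add: L2_set_def)
  finally show ?thesis .
qed

lemma reindex_if:
  assumes inj: "inj_on \<sigma> {..<N}" and fin: "finite I"
  shows "(\<Sum>i\<in>I. if i < N then g (\<sigma> i) else 0) = (\<Sum>j\<in>\<sigma> ` (I \<inter> {..<N}). g j)"
proof -
  have "(\<Sum>i\<in>I. if i < N then g (\<sigma> i) else 0) = (\<Sum>i\<in>I \<inter> {..<N}. g (\<sigma> i))"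
    using fin sum.inter_restrict[of I "\<lambda>i. g (\<sigma> i)" "{..<N}"] by simp
  also have "\<dots> = (\<Sum>j\<in>\<sigma> ` (I \<inter> {..<N}). g j)"
    using inj by (subst sum.reindex) (auto intro: inj_on_subset)
  finally show ?thesis .
qed





lemma kappa_elem:
  fixes X :: "nat \<Rightarrow> nat \<Rightarrow> real" and u :: "nat \<Rightarrow> real"
  assumes n: "n > 0" and Sp: "S \<subseteq> {1..p}" and Sne: "S \<noteq> {}" and l: "l > 0"
    and Lo: "\<And>Bs v. S \<subseteq> Bs \<Longrightarrow> Bs \<subseteq> {1..p} \<Longrightarrow> card (Bs - S) \<le> l \<Longrightarrow>
               qf X n Bs v \<ge> real n * a\<^sup>2 * nsq Bs v"
    and Up: "\<And>Bs v. Bs \<subseteq> {1..p} \<Longrightarrow> Bs \<inter> S = {} \<Longrightarrow> card Bs \<le> 4 * l \<Longrightarrow>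
               qf X n Bs v \<le> real n * b\<^sup>2 * nsq Bs v"
    and a: "a \<ge> 0" and b: "b \<ge> 0"
    and hb: "b * \<xi> * sqrt (real (card S)) \<le> a * sqrt (real l)"
    and uc: "u \<in> cone p \<xi> S" and un: "u \<noteq> (\<lambda>_. 0)"
  shows "Xnorm X n p u * sqrt (real (card S)) / (sqrt (real n) * l1_on S u) \<ge> a / 2"
proof -
  define T where "T = {1..p} - S"
  have finT: "finite T" by (simp add: T_def)
  have finS: "finite S" using Sp finite_subset by blast
  define N where "N = card T"
  define xs where "xs = sort_key (\<lambda>j. - \<bar>u j\<bar>) (sorted_list_of_set T)"
  define \<sigma> where "\<sigma> i = xs ! i" for i
  have setxs: "set xs = T" using finT by (simp add: xs_def)
  have dxs: "distinct xs" by (simp add: xs_def)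
  have len: "length xs = N" using distinct_card[OF dxs] setxs by (simp add: N_def)
  have inj: "inj_on \<sigma> {..<N}" unfolding \<sigma>_def using inj_on_nth[OF dxs] len by auto
  have img: "\<sigma> ` {..<N} = T"
    using nth_image[of N xs] len setxs by (simp add: \<sigma>_def atLeast0LessThan)
  have sortd: "sorted (map (\<lambda>j. - \<bar>u j\<bar>) xs)" by (simp add: xs_def)
  have smono: "\<bar>u (\<sigma> j)\<bar> \<le> \<bar>u (\<sigma> i)\<bar>" if "i \<le> j" "j < N" for i j
  proof -
    have "map (\<lambda>j. - \<bar>u j\<bar>) xs ! i \<le> map (\<lambda>j. - \<bar>u j\<bar>) xs ! j"
      using sortd that len unfolding sorted_iff_nth_mono by auto
    then show ?thesis using that len by (simp add: \<sigma>_def)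
  qed
  define y where "y i = (if i < N then \<bar>u (\<sigma> i)\<bar> else 0)" for i
  have ymono: "y j \<le> y i" if "i \<le> j" for i j
    using smono[OF that] that by (auto simp: y_def)
  have ynn: "y i \<ge> 0" for i by (simp add: y_def)
  have \<sigma>T: "\<sigma> i \<in> T" if "i < N" for i using img that by blast
  define B0 where "B0 = S \<union> \<sigma> ` ({..<l} \<inter> {..<N})"
  define Bt where "Bt t = \<sigma> ` ({l + t*(4*l)..<l + t*(4*l) + 4*l} \<inter> {..<N})" for t
  define P0 where "P0 r = (\<Sum>j\<in>B0. X r j * u j)" for r
  define Pt where "Pt t r = (\<Sum>j\<in>Bt t. X r j * u j)" for t r
  have Nle: "N \<le> N * (4*l)"
  proof -
    have "N * 1 \<le> N * (4*l)" by (rule mult_le_mono2) (use l in simp)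
    then show ?thesis by simp
  qed
  have decomp: "(\<Sum>j\<in>{1..p}. X r j * u j) = P0 r + (\<Sum>t<N. Pt t r)" for r
  proof -
    define g where "g j = X r j * u j" for j
    define f where "f i = (if i < N then g (\<sigma> i) else 0)" for i
    have reidx: "(\<Sum>i\<in>I. f i) = (\<Sum>j\<in>\<sigma> ` (I \<inter> {..<N}). g j)" if "finite I" for I
      unfolding f_def by (rule reindex_if[OF inj that])
    have "(\<Sum>j\<in>{1..p}. g j) = (\<Sum>j\<in>T. g j) + (\<Sum>j\<in>S. g j)"
      unfolding T_def using Sp by (intro sum.subset_diff) auto
    moreover have "(\<Sum>j\<in>T. g j) = (\<Sum>i<N. f i)" using reidx[of "{..<N}"] img by simp
    moreover have "(\<Sum>i<N. f i) = (\<Sum>i<l + N*(4*l). f i)"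
    proof -
      have "N \<le> l + N*(4*l)" using Nle by linarith
      then have "{..<N} \<subseteq> {..<l + N*(4*l)}" by (rule lessThan_subset_iff[THEN iffD2])
      then show ?thesis by (intro sum.mono_neutral_right[symmetric]) (auto simp: f_def)
    qed
    moreover have "(\<Sum>i<l + N*(4*l). f i) = (\<Sum>i<l. f i) + (\<Sum>i\<in>{l..<l + N*(4*l)}. f i)"
      by (metis atLeast0LessThan le_add1 sum.atLeastLessThan_concat zero_le)
    moreover have "(\<Sum>i\<in>{l..<l + N*(4*l)}. f i) = (\<Sum>t<N. \<Sum>i\<in>{l + t*(4*l)..<l + t*(4*l) + 4*l}. f i)"
    proof -
      have "(\<Sum>i\<in>{l..<l + N*(4*l)}. f i) = (\<Sum>i\<in>{0..<N*(4*l)}. f (i + l))"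
        using sum.shift_bounds_nat_ivl[of f 0 l "N*(4*l)"] by (simp add: add.commute)
      also have "\<dots> = (\<Sum>t<N. \<Sum>i\<in>{t*(4*l)..<t*(4*l)+4*l}. f (i + l))"
        by (simp add: sum.nat_group atLeast0LessThan)
      also have "\<dots> = (\<Sum>t<N. \<Sum>i\<in>{l + t*(4*l)..<l + t*(4*l) + 4*l}. f i)"
      proof (rule sum.cong[OF refl])
        fix t
        show "(\<Sum>i\<in>{t*(4*l)..<t*(4*l)+4*l}. f (i + l)) = (\<Sum>i\<in>{l + t*(4*l)..<l + t*(4*l) + 4*l}. f i)"
          using sum.shift_bounds_nat_ivl[of f "t*(4*l)" l "t*(4*l)+4*l"] by (simp add: add.commute add.left_commute)
      qed
      finally show ?thesis .
    qed
    moreover have "(\<Sum>i<l. f i) = (\<Sum>j\<in>\<sigma> ` ({..<l} \<inter> {..<N}). g j)" using reidx by simp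
    moreover have "(\<Sum>i\<in>{l + t*(4*l)..<l + t*(4*l) + 4*l}. f i) = Pt t r" for t
      using reidx unfolding Pt_def Bt_def g_def by simp
    moreover have "(\<Sum>j\<in>S. g j) + (\<Sum>j\<in>\<sigma> ` ({..<l} \<inter> {..<N}). g j) = P0 r"
    proof -
      have "S \<inter> \<sigma> ` ({..<l} \<inter> {..<N}) = {}" using \<sigma>T by (auto simp: T_def)
      then show ?thesis unfolding P0_def B0_def g_def
        by (subst sum.union_disjoint) (auto simp: finS)
    qed
    ultimately show ?thesis unfolding g_def by simp
  qed
  have B0p: "S \<subseteq> B0" "B0 \<subseteq> {1..p}" "card (B0 - S) \<le> l"
  proof -
    show "S \<subseteq> B0" by (simp add: B0_def)
    show "B0 \<subseteq> {1..p}" using Sp \<sigma>T by (auto simp: B0_def T_def)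
    have "B0 - S \<subseteq> \<sigma> ` ({..<l} \<inter> {..<N})" by (auto simp: B0_def)
    then have "card (B0 - S) \<le> card (\<sigma> ` ({..<l} \<inter> {..<N}))" by (intro card_mono) auto
    also have "\<dots> \<le> card ({..<l} \<inter> {..<N})" by (rule card_image_le) simp
    also have "\<dots> \<le> l" by (metis card_lessThan card_mono finite_lessThan inf_le1)
    finally show "card (B0 - S) \<le> l" .
  qed
  have Btp: "Bt t \<subseteq> {1..p}" "Bt t \<inter> S = {}" "card (Bt t) \<le> 4 * l" for t
  proof -
    show "Bt t \<subseteq> {1..p}" "Bt t \<inter> S = {}" using \<sigma>T by (auto simp: Bt_def T_def)
    have "card (Bt t) \<le> card ({l + t*(4*l)..<l + t*(4*l) + 4*l} \<inter> {..<N})"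
      unfolding Bt_def by (rule card_image_le) simp
    also have "\<dots> \<le> card {l + t*(4*l)..<l + t*(4*l) + 4*l}" by (intro card_mono) auto
    finally show "card (Bt t) \<le> 4 * l" by simp
  qed
  define Xn where "Xn = Xnorm X n p u"
  define q where "q = sqrt (nsq S u)"
  define L1 where "L1 = l1_on S u"
  define LT where "LT = l1_on T u"
  define rn where "rn = sqrt (real n)"
  define s' where "s' = sqrt (real (card S))"
  define sl where "sl = sqrt (real l)"
  have rn: "rn > 0" using n by (simp add: rn_def)
  have sl: "sl > 0" using l by (simp add: sl_def)
  have s': "s' > 0" using Sne finS by (simp add: s'_def card_gt_0_iff)
  have XnL2: "Xn = L2_set (\<lambda>r. P0 r + (\<Sum>t<N. Pt t r)) {..<n}"
    unfolding Xn_def Xnorm_def L2_set_def using decomp by simp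
  have P0low: "L2_set P0 {..<n} \<ge> rn * a * q"
  proof -
    have "L2_set P0 {..<n} = sqrt (qf X n B0 u)" by (simp add: L2_set_def qf_def P0_def)
    moreover have "qf X n B0 u \<ge> real n * a\<^sup>2 * nsq B0 u" using Lo[OF B0p] .
    moreover have "nsq B0 u \<ge> nsq S u"
      unfolding nsq_def using B0p finS by (intro sum_mono2) (auto intro: finite_subset)
    moreover have "real n * a\<^sup>2 * nsq S u \<le> real n * a\<^sup>2 * nsq B0 u"
      using \<open>nsq B0 u \<ge> nsq S u\<close> by (intro mult_left_mono) auto
    ultimately have "L2_set P0 {..<n} \<ge> sqrt (real n * a\<^sup>2 * nsq S u)"
      using real_sqrt_le_mono order_trans by metis
    also have "sqrt (real n * a\<^sup>2 * nsq S u) = rn * a * q"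
      using a by (simp add: rn_def q_def real_sqrt_mult)
    finally show ?thesis .
  qed
  have Ptup: "L2_set (Pt t) {..<n} \<le> rn * b * sqrt (\<Sum>i\<in>{l + t*(4*l)..<l + t*(4*l) + 4*l}. (y i)\<^sup>2)" for t
  proof -
    have "L2_set (Pt t) {..<n} = sqrt (qf X n (Bt t) u)" by (simp add: L2_set_def qf_def Pt_def)
    also have "\<dots> \<le> sqrt (real n * b\<^sup>2 * nsq (Bt t) u)" using Up[OF Btp] real_sqrt_le_mono by blast
    also have "nsq (Bt t) u = (\<Sum>i\<in>{l + t*(4*l)..<l + t*(4*l) + 4*l}. (y i)\<^sup>2)"
    proof -
      have "(\<Sum>i\<in>{l + t*(4*l)..<l + t*(4*l) + 4*l}. (y i)\<^sup>2)
           = (\<Sum>i\<in>{l + t*(4*l)..<l + t*(4*l) + 4*l}. if i < N then (u (\<sigma> i))\<^sup>2 else 0)"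
        by (rule sum.cong) (auto simp: y_def)
      also have "\<dots> = nsq (Bt t) u"
        unfolding nsq_def Bt_def by (rule reindex_if[OF inj]) simp
      finally show ?thesis by simp
    qed
    also have "sqrt (real n * b\<^sup>2 * (\<Sum>i\<in>{l + t*(4*l)..<l + t*(4*l) + 4*l}. (y i)\<^sup>2))
        = rn * b * sqrt (\<Sum>i\<in>{l + t*(4*l)..<l + t*(4*l) + 4*l}. (y i)\<^sup>2)"
      using b by (simp add: rn_def real_sqrt_mult)
    finally show ?thesis .
  qed
  have ysum: "(\<Sum>i<N*(4*l). y i) = LT"
  proof -
    have "(\<Sum>i<N*(4*l). y i) = (\<Sum>i<N. y i)"
      using Nle by (intro sum.mono_neutral_right) (auto simp: y_def)
    also have "\<dots> = (\<Sum>j\<in>\<sigma> ` ({..<N} \<inter> {..<N}). \<bar>u j\<bar>)"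
      unfolding y_def by (rule reindex_if[OF inj]) simp
    also have "\<dots> = LT" using img by (simp add: LT_def l1_on_def)
    finally show ?thesis .
  qed
  have tail: "(\<Sum>t<N. L2_set (Pt t) {..<n}) \<le> rn * b * (LT / (2 * sl))"
  proof -
    have "(\<Sum>t<N. L2_set (Pt t) {..<n}) \<le> (\<Sum>t<N. rn * b * sqrt (\<Sum>i\<in>{l + t*(4*l)..<l + t*(4*l) + 4*l}. (y i)\<^sup>2))"
      by (rule sum_mono) (rule Ptup)
    also have "\<dots> = rn * b * (\<Sum>t<N. sqrt (\<Sum>i\<in>{l + t*(4*l)..<l + t*(4*l) + 4*l}. (y i)\<^sup>2))"
      by (simp add: sum_distrib_left)
    also have "\<dots> \<le> rn * b * (LT / (2 * sl))"
      using shift_total[OF l ymono ynn, where N=N] ysum rn b unfolding sl_def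
      by (intro mult_left_mono) auto
    finally show ?thesis .
  qed
  have main1: "rn * a * q \<le> Xn + rn * b * (LT / (2 * sl))"
  proof -
    have "L2_set P0 {..<n} \<le> Xn + L2_set (\<lambda>r. \<Sum>t<N. Pt t r) {..<n}"
      unfolding XnL2 by (rule L2_reverse)
    also have "L2_set (\<lambda>r. \<Sum>t<N. Pt t r) {..<n} \<le> (\<Sum>t<N. L2_set (Pt t) {..<n})"
      by (rule L2_sum_le) simp
    finally show ?thesis using P0low tail by linarith
  qed
  have cone: "LT \<le> \<xi> * L1" using uc by (simp add: Defs.cone_def LT_def L1_def T_def)
  have cs: "L1 \<le> q * s'"
  proof -
    have "(\<Sum>i\<in>S. \<bar>u i\<bar> * \<bar>1::real\<bar>) \<le> L2_set u S * L2_set (\<lambda>_. 1) S" by (rule L2_set_mult_ineq)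
    then show ?thesis by (simp add: L1_def l1_on_def q_def s'_def L2_set_def nsq_def L2_set_constant)
  qed
  have L1pos: "L1 > 0"
  proof (rule ccontr)
    assume "\<not> L1 > 0"
    moreover have "L1 \<ge> 0" by (simp add: L1_def l1_on_def sum_nonneg)
    ultimately have L10: "L1 = 0" by simp
    have LT0: "LT \<le> 0" using cone L10 by simp
    have LTnn: "LT \<ge> 0" by (simp add: LT_def l1_on_def sum_nonneg)
    have "LT = 0" using LT0 LTnn by linarith
    have "\<forall>j\<in>S. \<bar>u j\<bar> = 0" using L10 finS sum_nonneg_eq_0_iff[of S "\<lambda>j. \<bar>u j\<bar>"] by (simp add: L1_def l1_on_def)
    moreover have "\<forall>j\<in>T. \<bar>u j\<bar> = 0" using \<open>LT = 0\<close> finT sum_nonneg_eq_0_iff[of T "\<lambda>j. \<bar>u j\<bar>"] by (simp add: LT_def l1_on_def)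
    moreover have "\<forall>j. j \<notin> {1..p} \<longrightarrow> u j = 0" using uc by (simp add: Defs.cone_def vec_p_def)
    ultimately have "u = (\<lambda>_. 0)" unfolding T_def by (intro ext) (metis DiffI abs_eq_0)
    with un show False by simp
  qed
  have h1: "a * L1 \<le> a * (q * s')" using cs a by (rule mult_left_mono)
  have h2: "b * LT * s' \<le> b * (\<xi> * L1) * s'" using cone b s' by (simp add: mult_left_mono mult_right_mono)
  have h3: "b * \<xi> * s' * L1 \<le> a * sl * L1" using hb L1pos unfolding s'_def sl_def by (simp add: mult_right_mono)
  have "Xn * s' \<ge> rn * a * q * s' - rn * b * (LT / (2 * sl)) * s'"
  proof -
    have "(rn * a * q - rn * b * (LT / (2 * sl))) * s' \<le> Xn * s'"
      using main1 s' by (intro mult_right_mono) auto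
    then show ?thesis by (simp add: left_diff_distrib)
  qed
  moreover have "rn * b * (LT / (2 * sl)) * s' = rn * (b * LT * s') / (2 * sl)" by simp
  moreover have "rn * (b * LT * s') / (2 * sl) \<le> rn * (a * sl * L1) / (2 * sl)"
    using h2 h3 rn sl by (intro divide_right_mono mult_left_mono) (auto simp: algebra_simps)
  moreover have "rn * (a * sl * L1) / (2 * sl) = rn * a * L1 / 2" using sl by simp
  moreover have "rn * a * q * s' \<ge> rn * a * L1" using h1 rn by (simp add: mult.assoc mult_left_mono)
  ultimately have "Xn * s' \<ge> rn * a * L1 / 2" by linarith
  then show ?thesis using rn L1pos unfolding Xn_def s'_def rn_def L1_def[symmetric]
    by (simp add: field_simps)
qed

lemma restrict_qf_nsq:
  "qf X n Bs (\<lambda>j. if j \<in> Bs then v j else 0) = qf X n Bs v"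
  "nsq Bs (\<lambda>j. if j \<in> Bs then v j else 0) = nsq Bs v"
  "supp_in Bs (\<lambda>j. if j \<in> Bs then v j else 0)"
  by (auto simp: qf_def nsq_def supp_in_def intro!: sum.cong)

theorem mainTheorem11:
  fixes X :: "nat \<Rightarrow> nat \<Rightarrow> real" and n p k l :: nat
    and \<xi> c_lo c_hi \<delta>0 \<delta>1 K :: real
  assumes col_norm: "\<forall>j\<in>{1..p}. (\<Sum>r<n. (X r j)\<^sup>2) = real n"
    and xi: "\<xi> \<ge> 1"
    and c: "0 < c_lo" "c_lo \<le> c_hi"
    and d0: "\<delta>0 > 0"
    and d1: "0 < \<delta>1" "\<delta>1 < 1"
    and K_def: "K = 4 * \<xi>\<^sup>2 * (c_hi / c_lo) * (1 + \<delta>1) / (1 - \<delta>1)"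
    and kl: "k > 0" "l > 0"
    and ratio: "4 * real l / real k \<ge> K"
    and size: "real (max (k + l) (4 * l)) \<le> \<delta>0 * real n / ln (real p)"
    and sparse: "\<forall>S m. S \<subseteq> {1..p} \<and> m > 0 \<and> real (card S + m) \<le> \<delta>0 * real n / ln (real p)
        \<longrightarrow> phi_minus X n p m S \<ge> c_lo * (1 - \<delta>1) \<and> phi_plus X n p m S \<le> c_hi * (1 + \<delta>1)"
  shows "\<forall>S. S \<subseteq> {1..p} \<and> S \<noteq> {} \<and> card S \<le> k \<longrightarrow>
     (let m = nat \<lceil>K * real (card S)\<rceil> in
       compat X n p \<xi> S \<ge> sqrt (c_lo * (1 - \<delta>1)) / 2 \<and>
       \<xi>\<^sup>2 * phi_plus X n p m S / (compat X n p \<xi> S)\<^sup>2 \<le> K)"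
proof (intro allI impI)
  fix S assume SS: "S \<subseteq> {1..p} \<and> S \<noteq> {} \<and> card S \<le> k"
  then have Sp: "S \<subseteq> {1..p}" and Sne: "S \<noteq> {}" and Sk: "card S \<le> k" by auto
  have finS: "finite S" using Sp finite_subset by blast
  define D where "D = \<delta>0 * real n / ln (real p)"
  have klD: "real (k + l) \<le> D" "real (4 * l) \<le> D" using size unfolding D_def by auto
  have n: "n > 0"
  proof (rule ccontr)
    assume "\<not> n > 0" then have "D = 0" by (simp add: D_def)
    with klD kl show False by simp
  qed
  define a where "a = sqrt (c_lo * (1 - \<delta>1))"
  define b where "b = sqrt (c_hi * (1 + \<delta>1))"
  have alo: "c_lo * (1 - \<delta>1) > 0" using c d1 by simp
  have bhi: "c_hi * (1 + \<delta>1) > 0" using c d1 by simp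
  have a: "a > 0" "a\<^sup>2 = c_lo * (1 - \<delta>1)" using alo by (auto simp: a_def)
  have b: "b > 0" "b\<^sup>2 = c_hi * (1 + \<delta>1)" using bhi by (auto simp: b_def)
  have Lo: "qf X n Bs v \<ge> real n * a\<^sup>2 * nsq Bs v"
    if "S \<subseteq> Bs" "Bs \<subseteq> {1..p}" "card (Bs - S) \<le> l" for Bs v
  proof -
    have "real (card S + l) \<le> D" using Sk klD by simp
    then have pm: "phi_minus X n p l S \<ge> c_lo * (1 - \<delta>1)" using sparse Sp kl unfolding D_def by blast
    define Fam where "Fam = {B. S \<subseteq> B \<and> B \<subseteq> {1..p} \<and> card (B - S) \<le> l \<and> B \<noteq> {}}"
    have finF: "finite Fam" by (rule finite_subset[of _ "Pow {1..p}"]) (auto simp: Fam_def)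
    have BsF: "Bs \<in> Fam" using that Sne by (auto simp: Fam_def)
    have "phi_minus X n p l S \<le> phi_min X n Bs"
      unfolding phi_minus_def Fam_def[symmetric] using finF BsF by (intro Min_le) auto
    then have pmin: "a\<^sup>2 \<le> phi_min X n Bs" using pm a by simp
    have finB: "finite Bs" using that(2) finite_subset by blast
    have BsNe: "Bs \<noteq> {}" using that(1) Sne by auto
    have "real n * phi_min X n Bs * nsq Bs v \<le> qf X n Bs v"
      using spectral_bounds[OF n finB BsNe restrict_qf_nsq(3)[of Bs v]] restrict_qf_nsq(1,2) by simp
    moreover have "real n * a\<^sup>2 * nsq Bs v \<le> real n * phi_min X n Bs * nsq Bs v"
      using pmin nsq_nonneg[of Bs v] by (intro mult_right_mono mult_left_mono) auto
    ultimately show ?thesis by linarith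
  qed
  have PP: "phi_plus X n p m {} \<le> b\<^sup>2" if "m > 0" "m \<le> 4 * l" for m
  proof -
    have "real (card {} + m) \<le> D" using that klD by simp
    then show ?thesis using sparse that b unfolding D_def by auto
  qed
  have Up: "qf X n Bs v \<le> real n * b\<^sup>2 * nsq Bs v"
    if "Bs \<subseteq> {1..p}" "Bs \<inter> S = {}" "card Bs \<le> 4 * l" for Bs v
  proof (cases "Bs = {}")
    case True then show ?thesis by (simp add: qf_def nsq_def)
  next
    case False
    have pp: "phi_plus X n p (4*l) {} \<le> b\<^sup>2" using PP kl by simp
    define Fam where "Fam = {B. B \<subseteq> {1..p} \<and> B \<inter> {} = {} \<and> card B \<le> 4*l \<and> B \<noteq> {}}"
    have finF: "finite Fam" by (rule finite_subset[of _ "Pow {1..p}"]) (auto simp: Fam_def)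
    have BsF: "Bs \<in> Fam" using that False by (auto simp: Fam_def)
    have "phi_max X n Bs \<le> phi_plus X n p (4*l) {}"
      unfolding phi_plus_def Fam_def[symmetric] using finF BsF by (intro Max_ge) auto
    then have pmax: "phi_max X n Bs \<le> b\<^sup>2" using pp by simp
    have finB: "finite Bs" using that(1) finite_subset by blast
    have "qf X n Bs v \<le> real n * phi_max X n Bs * nsq Bs v"
      using spectral_bounds[OF n finB False restrict_qf_nsq(3)[of Bs v]] restrict_qf_nsq(1,2) by simp
    moreover have "real n * phi_max X n Bs * nsq Bs v \<le> real n * b\<^sup>2 * nsq Bs v"
      using pmax nsq_nonneg[of Bs v] by (intro mult_right_mono mult_left_mono) auto
    ultimately show ?thesis by linarith
  qed
  have rat: "\<xi>\<^sup>2 * b\<^sup>2 * real k \<le> real l * a\<^sup>2"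
  proof -
    have "4 * \<xi>\<^sup>2 * (c_hi / c_lo) * (1 + \<delta>1) / (1 - \<delta>1) \<le> 4 * real l / real k"
      using ratio K_def by simp
    then have "4 * \<xi>\<^sup>2 * c_hi * (1 + \<delta>1) * real k \<le> 4 * real l * c_lo * (1 - \<delta>1)"
      using c d1 kl by (simp add: field_simps)
    then show ?thesis unfolding a(2) b(2) by (simp add: algebra_simps)
  qed
  have hb: "b * \<xi> * sqrt (real (card S)) \<le> a * sqrt (real l)"
  proof (rule power2_le_imp_le)
    have "\<xi>\<^sup>2 * b\<^sup>2 * real (card S) \<le> \<xi>\<^sup>2 * b\<^sup>2 * real k" using Sk by (intro mult_left_mono) auto
    then show "(b * \<xi> * sqrt (real (card S)))\<^sup>2 \<le> (a * sqrt (real l))\<^sup>2"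
      using rat by (simp add: power_mult_distrib algebra_simps)
    show "0 \<le> a * sqrt (real l)" using a by simp
  qed
  define V where "V = {Xnorm X n p u * sqrt (real (card S)) / (sqrt (real n) * l1_on S u)
                          | u. u \<in> cone p \<xi> S \<and> u \<noteq> (\<lambda>_. 0)}"
  have Vne: "V \<noteq> {}"
  proof -
    obtain j0 where j0: "j0 \<in> S" using Sne by auto
    define u0 where "u0 j = (if j = j0 then 1 else (0::real))" for j
    have "u0 \<in> cone p \<xi> S"
    proof -
      have "l1_on ({1..p} - S) u0 = 0" unfolding l1_on_def u0_def using j0 by (intro sum.neutral) auto
      moreover have "l1_on S u0 \<ge> 0" by (simp add: l1_on_def sum_nonneg)
      moreover have "vec_p p u0" using j0 Sp by (auto simp: vec_p_def u0_def)
      ultimately show ?thesis using xi by (simp add: Defs.cone_def)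
    qed
    moreover have "u0 \<noteq> (\<lambda>_. 0)" by (metis u0_def zero_neq_one)
    ultimately show ?thesis unfolding V_def by blast
  qed
  have kap: "compat X n p \<xi> S \<ge> a / 2"
    unfolding compat_def V_def[symmetric]
  proof (rule cInf_greatest[OF Vne])
    fix x assume "x \<in> V"
    then obtain u where u: "u \<in> cone p \<xi> S" "u \<noteq> (\<lambda>_. 0)"
      and x: "x = Xnorm X n p u * sqrt (real (card S)) / (sqrt (real n) * l1_on S u)"
      unfolding V_def by blast
    show "a / 2 \<le> x" unfolding x
      by (rule kappa_elem[OF n Sp Sne kl(2) Lo Up]) (use a b hb u in auto)
  qed
  define m where "m = nat \<lceil>K * real (card S)\<rceil>"
  have Kpos: "K > 0" using K_def c d1 xi by simp
  have s1: "real (card S) \<ge> 1" using Sne finS by (simp add: Suc_le_eq card_gt_0_iff)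
  have mpos: "m > 0" using Kpos s1 by (simp add: m_def)
  have Ks: "K * real (card S) \<le> real (4 * l)"
  proof -
    have "K * real (card S) \<le> 4 * real l / real k * real (card S)" using ratio s1 by (intro mult_right_mono) auto
    also have "\<dots> \<le> 4 * real l / real k * real k" using Sk kl by (intro mult_left_mono) auto
    finally show ?thesis using kl by simp
  qed
  have m4: "m \<le> 4 * l"
  proof -
    have "\<lceil>K * real (card S)\<rceil> \<le> int (4 * l)" using Ks by (simp only: ceiling_le_iff of_int_of_nat_eq)
    then show ?thesis using Ks by (simp add: m_def)
  qed
  have ppm: "phi_plus X n p m {} \<le> b\<^sup>2" by (rule PP[OF mpos m4])
  have mono: "phi_plus X n p m S \<le> phi_plus X n p m {}"
    unfolding phi_plus_def by (intro Max_mono) (auto intro: finite_subset[of _ "Pow {1..p}"])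
  have pnn: "phi_plus X n p m S \<ge> 0"
    unfolding phi_plus_def by (intro Max_ge) (auto intro: finite_subset[of _ "Pow {1..p}"])
  have kpos: "compat X n p \<xi> S > 0" using kap a by linarith
  have "\<xi>\<^sup>2 * phi_plus X n p m S / (compat X n p \<xi> S)\<^sup>2 \<le> \<xi>\<^sup>2 * b\<^sup>2 / (compat X n p \<xi> S)\<^sup>2"
    using mono ppm by (intro divide_right_mono mult_left_mono) auto
  also have "\<dots> \<le> \<xi>\<^sup>2 * b\<^sup>2 / (a / 2)\<^sup>2"
    using kap a by (intro divide_left_mono power_mono) auto
  also have "\<dots> = 4 * \<xi>\<^sup>2 * b\<^sup>2 / a\<^sup>2" using a by (simp add: power_divide field_simps)
  also have "\<dots> = K" unfolding a(2) b(2) K_def using c d1 by (simp add: field_simps)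
  finally have "\<xi>\<^sup>2 * phi_plus X n p m S / (compat X n p \<xi> S)\<^sup>2 \<le> K" .
  then show "let m = nat \<lceil>K * real (card S)\<rceil> in
       compat X n p \<xi> S \<ge> sqrt (c_lo * (1 - \<delta>1)) / 2 \<and>
       \<xi>\<^sup>2 * phi_plus X n p m S / (compat X n p \<xi> S)\<^sup>2 \<le> K"
    using kap unfolding Let_def m_def a_def by simp
qed


end
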